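(* There does not exist any generalized right linear one-way jumping finite automaton (GRLOWJFA) that accepts the language $Dc=\{wc: w\in D\}\subseteq\{a,b,c\}^*$, where $D$ is the Dyck language over $\{a,b\}$.
   Context: The Dyck language $D\subseteq\{a,b\}^*$ consists of the words $w$ with $|w|_a=|w|_b$ such that every prefix $u$ of $w$ has $|u|_a\ge|u|_b$ ($a$ opening, $b$ closing bracket; $|w|_a$ counts occurrences of $a$). "Subword" means a contiguous factor. A GRLOWJFA is a tuple $\mathcal{A}=(\Sigma,Q,q_0,F,R)$ with $\Sigma$ a finite alphabet, $Q$ a finite state set, $q_0\in Q$, $F\subseteq Q$, and $R\subset Q\times\Sigma^+\times Q$ a finite set of rules such that for each $p\in Q$, $w\in\Sigma^+$ at most one $q$ has $(p,w,q)\in R$ (meaning: go from $p$ to $q$ deleting $w$). $\Sigma_p=\{w:(p,w,q)\in R\text{ for some }q\}$. Configurations lie in $\Sigma^*Q\Sigma^*$. Moves $\curvearrowright$: (1) for $t,u,v\in\Sigma^*$ and $(p,x,q)\in R$: $tpuxv\curvearrowright tuqv$ provided $u$ contains no word of $\Sigma_p$ as a subword and there are no $u_1,x_2\in\Sigma^*$, $u_2,x_1\in\Sigma^+$ with $u=u_1u_2$, $x=x_1x_2$, $u_2x_1=x$; (2) for $x\in\Sigma^+$, $y\in\Sigma^*$ with $y$ containing no word of $\Sigma_p$ as a subword: $xpy\curvearrowright pxy$. The accepted language is $L_{GRL}(\mathcal{A})=\{w\in\Sigma^*: q_0w\curvearrowright^* q_f \text{ for some } q_f\in F\}$. *)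

theory Defs
  imports Main "HOL-Library.Sublist"
begin

datatype abc = La | Lb | Lc

definition dyck :: "abc list \<Rightarrow> bool" where
  "dyck w \<longleftrightarrow> set w \<subseteq> {La, Lb}
     \<and> count_list w La = count_list w Lb
     \<and> (\<forall>u. prefix u w \<longrightarrow> count_list u La \<ge> count_list u Lb)"

definition Dc :: "abc list set" where
  "Dc = {w @ [Lc] | w. dyck w}"

definition grlowjfa :: "'q set \<Rightarrow> 'q \<Rightarrow> 'q set \<Rightarrow> ('q \<times> abc list \<times> 'q) set \<Rightarrow> bool" where
  "grlowjfa Q q0 F R \<longleftrightarrow> finite Q \<and> q0 \<in> Q \<and> F \<subseteq> Q \<and> finite R
     \<and> (\<forall>(p, w, q) \<in> R. p \<in> Q \<and> w \<noteq> [] \<and> q \<in> Q)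
     \<and> (\<forall>p w q q'. (p, w, q) \<in> R \<longrightarrow> (p, w, q') \<in> R \<longrightarrow> q = q')"

definition Sigma_p :: "('q \<times> abc list \<times> 'q) set \<Rightarrow> 'q \<Rightarrow> abc list set" where
  "Sigma_p R p = {w. \<exists>q. (p, w, q) \<in> R}"

definition avoids :: "('q \<times> abc list \<times> 'q) set \<Rightarrow> 'q \<Rightarrow> abc list \<Rightarrow> bool" where
  "avoids R p u \<longleftrightarrow> (\<forall>w \<in> Sigma_p R p. \<not> sublist w u)"

text \<open>A configuration t p v (a word of the form Sigma* Q Sigma*) is represented
  as the triple (t, p, v).\<close>
inductive move :: "('q \<times> abc list \<times> 'q) set \<Rightarrow> abc list \<times> 'q \<times> abc list
    \<Rightarrow> abc list \<times> 'q \<times> abc list \<Rightarrow> bool" for R where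
  delete: "\<lbrakk> (p, x, q) \<in> R; avoids R p u;
             \<not> (\<exists>u1 u2 x1 x2. u = u1 @ u2 \<and> x = x1 @ x2 \<and> u2 \<noteq> [] \<and> x1 \<noteq> [] \<and> u2 @ x1 = x) \<rbrakk>
           \<Longrightarrow> move R (t, p, u @ x @ v) (t @ u, q, v)"
| jump: "\<lbrakk> x \<noteq> []; avoids R p y \<rbrakk> \<Longrightarrow> move R (x, p, y) ([], p, x @ y)"

definition L_GRL :: "'q \<Rightarrow> 'q set \<Rightarrow> ('q \<times> abc list \<times> 'q) set \<Rightarrow> abc list set" where
  "L_GRL q0 F R = {w. \<exists>qf \<in> F. (move R)\<^sup>*\<^sup>* ([], q0, w) ([], qf, [])}"

end

theory Submission
  imports Defs
begin

inductive walk :: "('q \<times> abc list \<times> 'q) set \<Rightarrow> 'q \<Rightarrow> abc list \<Rightarrow> 'q \<Rightarrow> bool" for R where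
  wnil: "walk R q [] q"
| wcons: "(q, x, q1) \<in> R \<Longrightarrow> walk R q1 w q2 \<Longrightarrow> walk R q (x @ w) q2"

lemma walk_append: "walk R q a q1 \<Longrightarrow> walk R q1 b q2 \<Longrightarrow> walk R q (a @ b) q2"
  by (induction rule: walk.induct) (auto intro: walk.intros)

lemma walk_single: "(q, x, q') \<in> R \<Longrightarrow> walk R q x q'"
  using wcons[OF _ wnil] by fastforce

lemma walk_snoc: "walk R q a q1 \<Longrightarrow> (q1, x, q2) \<in> R \<Longrightarrow> walk R q (a @ x) q2"
  by (rule walk_append, assumption, rule walk_single)

lemma walk_states: "walk R q w q' \<Longrightarrow> q \<in> Q \<Longrightarrow> \<forall>(p, x, p') \<in> R. p \<in> Q \<and> x \<noteq> [] \<and> p' \<in> Q \<Longrightarrow> q' \<in> Q"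
  by (induction rule: walk.induct) auto

lemma walk_nonempty_first:
  assumes "walk R p z q" "z \<noteq> []"
  shows "\<exists>x p2 r. (p, x, p2) \<in> R \<and> walk R p2 r q \<and> z = x @ r"
  using assms by (cases rule: walk.cases) auto

lemma avoids_Nil:
  assumes "grlowjfa Q q0 F R" shows "avoids R p []"
  using assms unfolding avoids_def Sigma_p_def grlowjfa_def by auto

lemma rule_nonempty: "grlowjfa Q q0 F R \<Longrightarrow> (p, x, q) \<in> R \<Longrightarrow> x \<noteq> []"
  unfolding grlowjfa_def by auto

lemma rule_states: "grlowjfa Q q0 F R \<Longrightarrow> (p, x, q) \<in> R \<Longrightarrow> p \<in> Q \<and> q \<in> Q"
  unfolding grlowjfa_def by auto

lemma hd_move:
  assumes G: "grlowjfa Q q0 F R" and r: "(q, x, q') \<in> R"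
  shows "move R (t, q, x @ v) (t, q', v)"
proof -
  have "move R (t, q, [] @ x @ v) (t @ [], q', v)"
    by (rule move.delete[OF r avoids_Nil[OF G]]) auto
  then show ?thesis by simp
qed

lemma walk_run:
  assumes G: "grlowjfa Q q0 F R"
  shows "walk R q w q' \<Longrightarrow> (move R)\<^sup>*\<^sup>* (t, q, w @ v) (t, q', v)"
proof (induction rule: walk.induct)
  case (wnil q) then show ?case by simp
next
  case (wcons q x q1 w q2)
  have "move R (t, q, x @ (w @ v)) (t, q1, w @ v)" by (rule hd_move[OF G wcons(1)])
  then show ?case using wcons(3) by simp
qed

lemma coreach:
  "(move R)\<^sup>*\<^sup>* c c' \<Longrightarrow> \<exists>w. walk R (fst (snd c)) w (fst (snd c'))"
proof (induction rule: rtranclp_induct)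
  case base then show ?case by (auto intro: wnil)
next
  case (step c1 c2)
  from step(2) show ?case
  proof cases
    case (delete p x q u t v)
    then show ?thesis using step(3) walk_snoc by fastforce
  next
    case (jump x p y)
    then show ?thesis using step(3) by auto
  qed
qed

lemma Dc_counts:
  assumes "w \<in> Dc"
  shows "count_list w La = count_list w Lb \<and> count_list w Lc = 1"
proof -
  obtain W where w: "w = W @ [Lc]" "dyck W" using assms unfolding Dc_def by auto
  then have "set W \<subseteq> {La, Lb}" "count_list W La = count_list W Lb" unfolding dyck_def by auto
  then have "count_list W Lc = 0" by (auto simp: count_list_0_iff)
  with w \<open>count_list W La = count_list W Lb\<close> show ?thesis by simp
qed

lemma Dc_last: "w \<in> Dc \<Longrightarrow> w \<noteq> [] \<and> last w = Lc"
  unfolding Dc_def by auto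

lemma accept_from:
  assumes G: "grlowjfa Q q0 F R" and Lang: "L_GRL q0 F R = Dc"
    and w: "walk R q0 u p" and acc: "(move R)\<^sup>*\<^sup>* ([], p, T) ([], qf, [])" and qf: "qf \<in> F"
  shows "u @ T \<in> Dc"
proof -
  have "(move R)\<^sup>*\<^sup>* ([], q0, u @ T) ([], p, T)" by (rule walk_run[OF G w])
  with acc have "(move R)\<^sup>*\<^sup>* ([], q0, u @ T) ([], qf, [])" by simp
  with qf have "u @ T \<in> L_GRL q0 F R" unfolding L_GRL_def by auto
  with Lang show ?thesis by simp
qed

lemma cyc_bal:
  assumes G: "grlowjfa Q q0 F R" and Lang: "L_GRL q0 F R = Dc"
    and w1: "walk R q0 u1 s" and wz: "walk R s z s" and w2: "walk R s u2 qf" and qf: "qf \<in> F"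
  shows "count_list z La = count_list z Lb \<and> count_list z Lc = 0"
proof -
  have a: "walk R q0 (u1 @ u2) qf" by (rule walk_append[OF w1 w2])
  have b: "walk R q0 (u1 @ z @ u2) qf" by (rule walk_append[OF w1 walk_append[OF wz w2]])
  have "(u1 @ u2) @ [] \<in> Dc" by (rule accept_from[OF G Lang a rtranclp.rtrancl_refl qf])
  moreover have "(u1 @ z @ u2) @ [] \<in> Dc" by (rule accept_from[OF G Lang b rtranclp.rtrancl_refl qf])
  ultimately have "count_list (u1 @ u2) La = count_list (u1 @ u2) Lb \<and> count_list (u1 @ u2) Lc = 1"
    "count_list (u1 @ z @ u2) La = count_list (u1 @ z @ u2) Lb \<and> count_list (u1 @ z @ u2) Lc = 1"
    using Dc_counts by (metis append_Nil2)+
  then show ?thesis by simp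
qed

lemma pureA_false: "z \<noteq> [] \<Longrightarrow> set z \<subseteq> {La} \<Longrightarrow> count_list z La = count_list z Lb \<Longrightarrow> False"
proof -
  assume "z \<noteq> []" "set z \<subseteq> {La}" "count_list z La = count_list z Lb"
  then have "La \<in> set z" "Lb \<notin> set z" by (cases z; auto)+
  then show False using \<open>count_list z La = count_list z Lb\<close> count_list_0_iff[of z La] count_list_0_iff[of z Lb] by simp
qed

lemma noA_false: "z \<noteq> [] \<Longrightarrow> La \<notin> set z \<Longrightarrow> count_list z La = count_list z Lb \<Longrightarrow> count_list z Lc = 0 \<Longrightarrow> False"
proof -
  assume h: "z \<noteq> []" "La \<notin> set z" "count_list z La = count_list z Lb" "count_list z Lc = 0"
  then have "Lb \<notin> set z" "Lc \<notin> set z" by (auto simp: count_list_0_iff[symmetric])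
  with h obtain l where "l \<in> set z" by (cases z) auto
  with h \<open>Lb \<notin> set z\<close> \<open>Lc \<notin> set z\<close> show False by (cases l) auto
qed



lemma jump_acyclic:
  assumes G: "grlowjfa Q q0 F R" and Lang: "L_GRL q0 F R = Dc"
    and wL: "walk R q0 u' L"
    and seg: "\<forall>z. (move R)\<^sup>*\<^sup>* ([], L, T @ z) (t, p, v @ z)"
    and tne: "t \<noteq> []" and av: "avoids R p v"
    and acc: "(move R)\<^sup>*\<^sup>* ([], p, t @ v) ([], qf, [])" and qf: "qf \<in> F"
    and wp: "walk R q0 u p"
    and cyc: "walk R p z p" and zne: "z \<noteq> []"
  shows False
proof -
  obtain u2 where w2: "walk R p u2 qf" using coreach[OF acc] by auto
  have bal: "count_list z La = count_list z Lb \<and> count_list z Lc = 0"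
    by (rule cyc_bal[OF G Lang wp cyc w2 qf])
  have "u @ (t @ v) \<in> Dc" by (rule accept_from[OF G Lang wp acc qf])
  then have "last (u @ (t @ v)) = Lc" using Dc_last by blast
  then have lastc: "last (t @ v) = Lc" using tne by simp
  have jmp: "move R (t, p, v) ([], p, t @ v)" by (rule move.jump[OF tne av])
  have "(move R)\<^sup>*\<^sup>* ([], L, T) ([], qf, [])"
  proof -
    have "(move R)\<^sup>*\<^sup>* ([], L, T) (t, p, v)" using seg[rule_format, of "[]"] by simp
    also have "(move R)\<^sup>*\<^sup>* (t, p, v) ([], p, t @ v)" using jmp by (rule r_into_rtranclp)
    also note acc
    finally show ?thesis .
  qed
  then have TDc: "u' @ T \<in> Dc" by (rule accept_from[OF G Lang wL _ qf])
  obtain x1 p2 r where r1: "(p, x1, p2) \<in> R" and wr: "walk R p2 r p" and zdec: "z = x1 @ r"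
    using walk_nonempty_first[OF cyc zne] by auto
  have x1c: "Lc \<notin> set x1" using bal zdec by (simp add: count_list_0_iff)
  have novl: "\<not> (\<exists>u1 u2 xa xb. v = u1 @ u2 \<and> x1 = xa @ xb \<and> u2 \<noteq> [] \<and> xa \<noteq> [] \<and> u2 @ xa = x1)"
  proof
    assume "\<exists>u1 u2 xa xb. v = u1 @ u2 \<and> x1 = xa @ xb \<and> u2 \<noteq> [] \<and> xa \<noteq> [] \<and> u2 @ xa = x1"
    then obtain u1 u2 xa where h: "v = u1 @ u2" "u2 \<noteq> []" "u2 @ xa = x1" by blast
    then have "last v = last u2" by simp
    moreover have "last u2 \<in> set x1"
    proof -
      have "last u2 \<in> set u2" using h(2) by (rule last_in_set)
      then show ?thesis using h(3) by auto
    qed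
    moreover have "last (t @ v) = last v" using h by simp
    ultimately show False using lastc x1c by simp
  qed
  have m1: "move R (t, p, v @ x1 @ r) (t @ v, p2, r)" by (rule move.delete[OF r1 av novl])
  have m2: "(move R)\<^sup>*\<^sup>* (t @ v, p2, r @ []) (t @ v, p, [])" by (rule walk_run[OF G wr])
  have m3: "move R (t @ v, p, []) ([], p, (t @ v) @ [])"
    by (rule move.jump) (use tne avoids_Nil[OF G] in auto)
  have s1: "(move R)\<^sup>*\<^sup>* ([], q0, u' @ (T @ z)) ([], L, T @ z)" by (rule walk_run[OF G wL])
  have "(move R)\<^sup>*\<^sup>* ([], q0, u' @ T @ z) ([], qf, [])"
  proof -
    have a: "(move R)\<^sup>*\<^sup>* ([], q0, u' @ T @ z) (t, p, v @ x1 @ r)"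
      using rtranclp_trans[OF s1 seg[rule_format, of z]] zdec by simp
    have m2': "(move R)\<^sup>*\<^sup>* (t @ v, p2, r) (t @ v, p, [])" using m2 by simp
    have m3': "move R (t @ v, p, []) ([], p, t @ v)" using m3 by simp
    have b: "(move R)\<^sup>*\<^sup>* (t, p, v @ x1 @ r) (t @ v, p, [])"
      by (rule converse_rtranclp_into_rtranclp[OF m1 m2'])
    show ?thesis using rtranclp_trans[OF rtranclp_trans[OF a b] converse_rtranclp_into_rtranclp[OF m3' acc]] .
  qed
  with qf Lang have "u' @ T @ z \<in> Dc" unfolding L_GRL_def by auto
  then have "last (u' @ T @ z) = Lc" using Dc_last by blast
  then have "last z = Lc" using zne by simp
  then have "Lc \<in> set z" using last_in_set[OF zne] by simp
  then show False using bal by (simp add: count_list_0_iff)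
qed



fun rk :: "abc \<Rightarrow> nat" where
  "rk La = 0" | "rk Lb = 1" | "rk Lc = 2"

definition srt :: "abc list \<Rightarrow> bool" where
  "srt w \<longleftrightarrow> sorted (map rk w)"

lemma srt_drop_mid: "srt (a @ m @ b) \<Longrightarrow> srt (a @ b)"
  unfolding srt_def by (auto simp: sorted_append)

lemma srt_noA:
  assumes "srt (D @ x)" "l \<in> set D" "l \<noteq> La" shows "La \<notin> set x"
proof
  assume "La \<in> set x"
  moreover have "\<forall>a\<in>set (map rk D). \<forall>b\<in>set (map rk x). a \<le> b"
    using assms(1) unfolding srt_def map_append sorted_append by blast
  ultimately have "rk l \<le> rk La" using assms(2) by (metis image_eqI list.set_map)
  with assms(3) show False by (cases l) auto
qed

definition Phi :: "'q set \<Rightarrow> ('q \<times> abc list \<times> 'q) set \<Rightarrow> 'q \<Rightarrow> nat" where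
  "Phi Q R x = card {q \<in> Q. \<exists>w. walk R x w q}"

lemma Phi_le: "finite Q \<Longrightarrow> Phi Q R x \<le> card Q"
  unfolding Phi_def by (rule card_mono) auto

lemma Phi_ge1: "finite Q \<Longrightarrow> x \<in> Q \<Longrightarrow> 1 \<le> Phi Q R x"
proof -
  assume "finite Q" "x \<in> Q"
  then have "x \<in> {q \<in> Q. \<exists>w. walk R x w q}" by (auto intro: wnil)
  moreover have "finite {q \<in> Q. \<exists>w. walk R x w q}" using \<open>finite Q\<close> by auto
  ultimately show ?thesis unfolding Phi_def by (metis One_nat_def Suc_leI card_gt_0_iff empty_iff)
qed

lemma Phi_less:
  assumes fin: "finite Q" and LQ: "L \<in> Q" and w: "walk R L D p" and Dne: "D \<noteq> []"
    and acyc: "\<not> (\<exists>z. z \<noteq> [] \<and> walk R L z L)"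
  shows "Phi Q R p < Phi Q R L"
proof -
  have sub: "{q \<in> Q. \<exists>w. walk R p w q} \<subseteq> {q \<in> Q. \<exists>w. walk R L w q}"
  proof
    fix q assume "q \<in> {q \<in> Q. \<exists>w. walk R p w q}"
    then obtain w' where "q \<in> Q" "walk R p w' q" by auto
    then show "q \<in> {q \<in> Q. \<exists>w. walk R L w q}" using walk_append[OF w] by blast
  qed
  have "L \<in> {q \<in> Q. \<exists>w. walk R L w q}" using LQ by (auto intro: wnil)
  moreover have "L \<notin> {q \<in> Q. \<exists>w. walk R p w q}"
  proof
    assume "L \<in> {q \<in> Q. \<exists>w. walk R p w q}"
    then obtain w' where "walk R p w' L" by auto
    then have "walk R L (D @ w') L" by (rule walk_append[OF w])
    with acyc Dne show False by auto
  qed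
  ultimately have "{q \<in> Q. \<exists>w. walk R p w q} \<subset> {q \<in> Q. \<exists>w. walk R L w q}" using sub by blast
  then show ?thesis unfolding Phi_def by (rule psubset_card_mono[rotated]) (use fin in auto)
qed

definition Inv0 :: "'q set \<Rightarrow> 'q \<Rightarrow> ('q \<times> abc list \<times> 'q) set \<Rightarrow> nat \<Rightarrow> abc list
    \<Rightarrow> abc list \<Rightarrow> 'q \<Rightarrow> abc list \<Rightarrow> 'q \<Rightarrow> abc list \<Rightarrow> nat \<Rightarrow> abc list \<Rightarrow> 'q set \<Rightarrow> 'q set
    \<Rightarrow> bool \<Rightarrow> abc list \<Rightarrow> bool" where
  "Inv0 Q q0 R K I t p v L T m D A B bph u' \<longleftrightarrow>
    p \<in> Q \<and> L \<in> Q \<and> walk R q0 u' L \<and> walk R L D p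
    \<and> (\<forall>z. (move R)\<^sup>*\<^sup>* ([], L, T @ z) (t, p, v @ z))
    \<and> srt (t @ v) \<and> srt (D @ v)
    \<and> (t \<noteq> [] \<longrightarrow> D \<noteq> [])
    \<and> Phi Q R L + m \<le> card Q + 1
    \<and> (0 < m \<longrightarrow> \<not> (\<exists>z. z \<noteq> [] \<and> walk R L z L))
    \<and> length I \<le> length (t @ v) + m * (K * (2 * card Q + 1)) + length D
    \<and> length D \<le> K * (card A + (if bph then card B + 1 else 0))
    \<and> A \<subseteq> Q \<and> B \<subseteq> Q
    \<and> (\<not> bph \<longrightarrow> p \<notin> A \<and> (\<forall>s\<in>A. \<exists>z. z \<noteq> [] \<and> set z \<subseteq> {La} \<and> walk R s z p))
    \<and> (bph \<longrightarrow> p \<notin> B \<and> (\<forall>s\<in>B. \<exists>z. z \<noteq> [] \<and> La \<notin> set z \<and> walk R s z p)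
              \<and> (\<exists>l\<in>set D. l \<noteq> La))"

definition Inv :: "'q set \<Rightarrow> 'q \<Rightarrow> ('q \<times> abc list \<times> 'q) set \<Rightarrow> nat \<Rightarrow> abc list
    \<Rightarrow> abc list \<Rightarrow> 'q \<Rightarrow> abc list \<Rightarrow> bool" where
  "Inv Q q0 R K I t p v \<longleftrightarrow> (\<exists>L T m D A B bph u'. Inv0 Q q0 R K I t p v L T m D A B bph u')"



lemma inv_delete:
  assumes G: "grlowjfa Q q0 F R" and Lang: "L_GRL q0 F R = Dc" and qf: "qf \<in> F"
    and Kb: "\<forall>(p, x, q) \<in> R. length x \<le> K"
    and H: "Inv0 Q q0 R K I t p (u @ x @ v) L T m D A B bph u'"
    and r: "(p, x, q) \<in> R" and av: "avoids R p u"
    and novl: "\<not> (\<exists>u1 u2 x1 x2. u = u1 @ u2 \<and> x = x1 @ x2 \<and> u2 \<noteq> [] \<and> x1 \<noteq> [] \<and> u2 @ x1 = x)"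
    and acc2: "(move R)\<^sup>*\<^sup>* (t @ u, q, v) ([], qf, [])"
  shows "Inv Q q0 R K I (t @ u) q v"
proof -
  have finQ: "finite Q" using G unfolding grlowjfa_def by auto
  from H have pQ: "p \<in> Q" and LQ: "L \<in> Q" and wL: "walk R q0 u' L" and wD: "walk R L D p"
    and seg: "\<forall>z. (move R)\<^sup>*\<^sup>* ([], L, T @ z) (t, p, (u @ x @ v) @ z)"
    and st: "srt (t @ u @ x @ v)" and sD: "srt (D @ u @ x @ v)"
    and Ph: "Phi Q R L + m \<le> card Q + 1"
    and acyc: "0 < m \<longrightarrow> \<not> (\<exists>z. z \<noteq> [] \<and> walk R L z L)"
    and len: "length I \<le> length (t @ u @ x @ v) + m * (K * (2 * card Q + 1)) + length D"
    and lenD: "length D \<le> K * (card A + (if bph then card B + 1 else 0))"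
    and AQ: "A \<subseteq> Q" and BQ: "B \<subseteq> Q"
    and aph: "\<not> bph \<longrightarrow> p \<notin> A \<and> (\<forall>s\<in>A. \<exists>z. z \<noteq> [] \<and> set z \<subseteq> {La} \<and> walk R s z p)"
    and bph: "bph \<longrightarrow> p \<notin> B \<and> (\<forall>s\<in>B. \<exists>z. z \<noteq> [] \<and> La \<notin> set z \<and> walk R s z p)
              \<and> (\<exists>l\<in>set D. l \<noteq> La)"
    unfolding Inv0_def by blast+
  have qQ: "q \<in> Q" using rule_states[OF G r] by simp
  have xne: "x \<noteq> []" using rule_nonempty[OF G r] .
  have xK: "length x \<le> K" using Kb r by auto
  have wD': "walk R L (D @ x) q" by (rule walk_snoc[OF wD r])
  have wq: "walk R q0 (u' @ D @ x) q" using walk_append[OF wL wD'] by simp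
  obtain w2 where w2: "walk R q w2 qf" using coreach[OF acc2] by auto
  have balq: "\<And>z. walk R q z q \<Longrightarrow> count_list z La = count_list z Lb \<and> count_list z Lc = 0"
    by (rule cyc_bal[OF G Lang wq _ w2 qf])
  have seg': "\<forall>z. (move R)\<^sup>*\<^sup>* ([], L, T @ z) (t @ u, q, v @ z)"
  proof
    fix z
    have "move R (t, p, u @ x @ (v @ z)) (t @ u, q, v @ z)" by (rule move.delete[OF r av novl])
    then have "move R (t, p, (u @ x @ v) @ z) (t @ u, q, v @ z)" by simp
    with seg show "(move R)\<^sup>*\<^sup>* ([], L, T @ z) (t @ u, q, v @ z)" by (meson rtranclp.rtrancl_into_rtrancl)
  qed
  have st': "srt ((t @ u) @ v)" using srt_drop_mid[of "t @ u" x v] st by simp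
  have sD': "srt ((D @ x) @ v)" using srt_drop_mid[of D u "x @ v"] sD by simp
  have tD': "t @ u \<noteq> [] \<longrightarrow> D @ x \<noteq> []" using xne by simp
  have len': "length I \<le> length ((t @ u) @ v) + m * (K * (2 * card Q + 1)) + length (D @ x)"
    using len by simp
  have finA: "finite A" using AQ finQ finite_subset by blast
  have finB: "finite B" using BQ finQ finite_subset by blast
  show ?thesis
  proof (cases bph)
    case False
    note aph' = aph[rule_format, OF False]
    show ?thesis
    proof (cases "set x \<subseteq> {La}")
      case True
      let ?A = "insert p A"
      have cardA: "card ?A = card A + 1" using aph' finA by simp
      have walksA: "\<forall>s\<in>?A. \<exists>z. z \<noteq> [] \<and> set z \<subseteq> {La} \<and> walk R s z q"
      proof
        fix s assume "s \<in> ?A"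
        then show "\<exists>z. z \<noteq> [] \<and> set z \<subseteq> {La} \<and> walk R s z q"
        proof
          assume "s = p" then show ?thesis using xne True walk_single[OF r] by blast
        next
          assume "s \<in> A"
          then obtain z where "z \<noteq> []" "set z \<subseteq> {La}" "walk R s z p" using aph' by blast
          then show ?thesis using True walk_snoc[OF _ r] by (intro exI[of _ "z @ x"]) auto
        qed
      qed
      have qA: "q \<notin> ?A"
      proof
        assume "q \<in> ?A"
        then obtain z where "z \<noteq> []" "set z \<subseteq> {La}" "walk R q z q" using walksA by blast
        then show False using balq pureA_false by blast
      qed
      have lenD': "length (D @ x) \<le> K * (card ?A + (if False then card B + 1 else 0))"
        using lenD False xK cardA by simp
      have AQ': "?A \<subseteq> Q" using AQ pQ by simp
      have "Inv0 Q q0 R K I (t @ u) q v L T m (D @ x) ?A B False u'"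
        unfolding Inv0_def using qQ LQ wL wD' seg' st' sD' tD' Ph acyc len' lenD' AQ' BQ qA walksA
        by blast
      then show ?thesis unfolding Inv_def by blast
    next
      case notA: False
      then obtain l where l: "l \<in> set x" "l \<noteq> La" by auto
      have ex: "\<exists>l\<in>set (D @ x). l \<noteq> La" using l by auto
      have lenD': "length (D @ x) \<le> K * (card A + (if True then card ({}::'q set) + 1 else 0))"
        using lenD False xK by simp
      have "Inv0 Q q0 R K I (t @ u) q v L T m (D @ x) A {} True u'"
        unfolding Inv0_def using qQ LQ wL wD' seg' st' sD' tD' Ph acyc len' lenD' AQ ex
        by blast
      then show ?thesis unfolding Inv_def by blast
    qed
  next
    case True
    note bph' = bph[rule_format, OF True]
    obtain l where l: "l \<in> set D" "l \<noteq> La" using bph' by blast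
    have sDx: "srt (D @ x)" using srt_drop_mid[of "D @ x" v "[]"] sD' by simp
    have xnoA: "La \<notin> set x" by (rule srt_noA[OF sDx l])
    let ?B = "insert p B"
    have cardB: "card ?B = card B + 1" using bph' finB by simp
    have walksB: "\<forall>s\<in>?B. \<exists>z. z \<noteq> [] \<and> La \<notin> set z \<and> walk R s z q"
    proof
      fix s assume "s \<in> ?B"
      then show "\<exists>z. z \<noteq> [] \<and> La \<notin> set z \<and> walk R s z q"
      proof
        assume "s = p" then show ?thesis using xne xnoA walk_single[OF r] by blast
      next
        assume "s \<in> B"
        then obtain z where "z \<noteq> []" "La \<notin> set z" "walk R s z p" using bph' by blast
        then show ?thesis using xnoA walk_snoc[OF _ r] by (intro exI[of _ "z @ x"]) auto
      qed
    qed
    have qB: "q \<notin> ?B"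
    proof
      assume "q \<in> ?B"
      then obtain z where "z \<noteq> []" "La \<notin> set z" "walk R q z q" using walksB by blast
      then show False using balq noA_false by blast
    qed
    have ex: "\<exists>l\<in>set (D @ x). l \<noteq> La" using l by auto
    have lenD': "length (D @ x) \<le> K * (card A + (if True then card ?B + 1 else 0))"
      using lenD True xK cardB by simp
    have BQ': "?B \<subseteq> Q" using BQ pQ by simp
    have "Inv0 Q q0 R K I (t @ u) q v L T m (D @ x) A ?B True u'"
      unfolding Inv0_def using qQ LQ wL wD' seg' st' sD' tD' Ph acyc len' lenD' AQ BQ' qB walksB ex
      by blast
    then show ?thesis unfolding Inv_def by blast
  qed
qed



lemma inv_jump:
  assumes G: "grlowjfa Q q0 F R" and Lang: "L_GRL q0 F R = Dc" and qf: "qf \<in> F"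
    and H: "Inv0 Q q0 R K I x p y L T m D A B bph u'"
    and xne: "x \<noteq> []" and av: "avoids R p y"
    and acc2: "(move R)\<^sup>*\<^sup>* ([], p, x @ y) ([], qf, [])"
  shows "Inv Q q0 R K I [] p (x @ y)"
proof -
  have finQ: "finite Q" using G unfolding grlowjfa_def by auto
  from H have pQ: "p \<in> Q" and LQ: "L \<in> Q" and wL: "walk R q0 u' L" and wD: "walk R L D p"
    and seg: "\<forall>z. (move R)\<^sup>*\<^sup>* ([], L, T @ z) (x, p, y @ z)"
    and st: "srt (x @ y)"
    and tD: "x \<noteq> [] \<longrightarrow> D \<noteq> []"
    and Ph: "Phi Q R L + m \<le> card Q + 1"
    and acyc: "0 < m \<longrightarrow> \<not> (\<exists>z. z \<noteq> [] \<and> walk R L z L)"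
    and len: "length I \<le> length (x @ y) + m * (K * (2 * card Q + 1)) + length D"
    and lenD: "length D \<le> K * (card A + (if bph then card B + 1 else 0))"
    and AQ: "A \<subseteq> Q" and BQ: "B \<subseteq> Q"
    unfolding Inv0_def by blast+
  have wp: "walk R q0 (u' @ D) p" by (rule walk_append[OF wL wD])
  have acycp: "\<not> (\<exists>z. z \<noteq> [] \<and> walk R p z p)"
    using jump_acyclic[OF G Lang wL seg xne av acc2 qf wp] by blast
  have Dne: "D \<noteq> []" using tD xne by simp
  have Ph': "Phi Q R p + (m + 1) \<le> card Q + 1"
  proof (cases m)
    case 0 then show ?thesis using Phi_le[OF finQ, of R p] by simp
  next
    case (Suc k)
    then have "\<not> (\<exists>z. z \<noteq> [] \<and> walk R L z L)" using acyc by simp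
    then have "Phi Q R p < Phi Q R L" by (rule Phi_less[OF finQ LQ wD Dne])
    then show ?thesis using Ph by simp
  qed
  have cA: "card A \<le> card Q" by (rule card_mono[OF finQ AQ])
  have cB: "card B \<le> card Q" by (rule card_mono[OF finQ BQ])
  have "card A + (if bph then card B + 1 else 0) \<le> 2 * card Q + 1" using cA cB by auto
  then have "K * (card A + (if bph then card B + 1 else 0)) \<le> K * (2 * card Q + 1)"
    by (rule mult_le_mono2)
  with lenD have lD: "length D \<le> K * (2 * card Q + 1)" by linarith
  have len': "length I \<le> length ([] @ (x @ y)) + (m + 1) * (K * (2 * card Q + 1)) + length ([]::abc list)"
    using len lD by simp
  have seg': "\<forall>z. (move R)\<^sup>*\<^sup>* ([], p, (x @ y) @ z) ([], p, (x @ y) @ z)" by simp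
  have st': "srt ([] @ (x @ y))" using st by simp
  have "Inv0 Q q0 R K I [] p (x @ y) p (x @ y) (m + 1) [] {} {} False (u' @ D)"
    unfolding Inv0_def using pQ wp wnil[of R p] seg' st' Ph' acycp len' by auto
  then show ?thesis unfolding Inv_def by blast
qed

lemma inv_run:
  assumes G: "grlowjfa Q q0 F R" and Lang: "L_GRL q0 F R = Dc" and qf: "qf \<in> F"
    and srtI: "srt I" and Kb: "\<forall>(p, x, q) \<in> R. length x \<le> K"
  shows "(move R)\<^sup>*\<^sup>* ([], q0, I) c \<Longrightarrow> (move R)\<^sup>*\<^sup>* c ([], qf, [])
     \<Longrightarrow> Inv Q q0 R K I (fst c) (fst (snd c)) (snd (snd c))"
proof (induction rule: rtranclp_induct)
  case base
  have finQ: "finite Q" and q0Q: "q0 \<in> Q" using G unfolding grlowjfa_def by auto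
  have "Phi Q R q0 + 0 \<le> card Q + 1" using Phi_le[OF finQ, of R q0] by simp
  then have "Inv0 Q q0 R K I [] q0 I q0 I 0 [] {} {} False []"
    unfolding Inv0_def using q0Q wnil[of R q0] srtI by auto
  then show ?case unfolding Inv_def by (simp only: fst_conv snd_conv) blast
next
  case (step c1 c2)
  have acc1: "(move R)\<^sup>*\<^sup>* c1 ([], qf, [])"
    using step(2) step(4) by (rule converse_rtranclp_into_rtranclp)
  have I1: "Inv Q q0 R K I (fst c1) (fst (snd c1)) (snd (snd c1))" using step(3) acc1 by blast
  from step(2) show ?case
  proof cases
    case (delete p x q u t v)
    from I1 obtain L T m D A B bph u' where H: "Inv0 Q q0 R K I t p (u @ x @ v) L T m D A B bph u'"
      using delete unfolding Inv_def by auto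
    have acc2: "(move R)\<^sup>*\<^sup>* (t @ u, q, v) ([], qf, [])" using step(4) delete by simp
    show ?thesis using inv_delete[OF G Lang qf Kb H delete(3) delete(4) delete(5) acc2] delete by simp
  next
    case (jump x p y)
    from I1 obtain L T m D A B bph u' where H: "Inv0 Q q0 R K I x p y L T m D A B bph u'"
      using jump unfolding Inv_def by auto
    have acc2: "(move R)\<^sup>*\<^sup>* ([], p, x @ y) ([], qf, [])" using step(4) jump by simp
    show ?thesis using inv_jump[OF G Lang qf H jump(3) jump(4) acc2] jump by simp
  qed
qed

lemma count_rep: "count_list (replicate n a) b = (if a = b then n else 0)"
  by (induction n) auto

lemma dyck_ab: "dyck (replicate n La @ replicate n Lb)"
  unfolding dyck_def
proof (intro conjI allI impI)
  show "set (replicate n La @ replicate n Lb) \<subseteq> {La, Lb}" by auto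
  show "count_list (replicate n La @ replicate n Lb) La = count_list (replicate n La @ replicate n Lb) Lb"
    by (simp add: count_rep)
  fix u assume "prefix u (replicate n La @ replicate n Lb)"
  then have "prefix u (replicate n La) \<or> (\<exists>us. u = replicate n La @ us \<and> prefix us (replicate n Lb))"
    by (simp add: prefix_append)
  then show "count_list u Lb \<le> count_list u La"
  proof
    assume "prefix u (replicate n La)"
    then have "set u \<subseteq> {La}" using set_mono_prefix by fastforce
    then have "Lb \<notin> set u" by auto
    then show ?thesis by simp
  next
    assume "\<exists>us. u = replicate n La @ us \<and> prefix us (replicate n Lb)"
    then obtain us where us: "u = replicate n La @ us" "prefix us (replicate n Lb)" by blast
    then have "set us \<subseteq> {Lb}" using set_mono_prefix by fastforce
    then have "La \<notin> set us" by auto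
    moreover have "length us \<le> n" using prefix_length_le[OF us(2)] by simp
    moreover have "count_list us Lb \<le> length us" by (rule count_le_length)
    ultimately show ?thesis using us(1) by (simp add: count_rep)
  qed
qed

theorem lemma6:
  fixes Q :: "'q set" and q0 :: 'q and F :: "'q set" and R :: "('q \<times> abc list \<times> 'q) set"
  shows "\<not> (grlowjfa Q q0 F R \<and> L_GRL q0 F R = Dc)"
proof
  assume h: "grlowjfa Q q0 F R \<and> L_GRL q0 F R = Dc"
  then have G: "grlowjfa Q q0 F R" and Lang: "L_GRL q0 F R = Dc" by auto
  have finR: "finite R" and finQ: "finite Q" using G unfolding grlowjfa_def by auto
  define K where "K = Max (insert 0 ((\<lambda>(p, x, q). length x) ` R))"
  have Kb: "\<forall>(p, x, q) \<in> R. length x \<le> K"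
  proof (intro ballI)
    fix e assume "e \<in> R"
    then have "(\<lambda>(p, x, q). length x) e \<in> insert 0 ((\<lambda>(p, x, q). length x) ` R)" by blast
    then have "(\<lambda>(p, x, q). length x) e \<le> K" unfolding K_def using finR by simp
    then show "case e of (p, x, q) \<Rightarrow> length x \<le> K" by (auto split: prod.splits)
  qed
  define N where "N = card Q"
  define n where "n = (N + 1) * (K * (2 * N + 1))"
  define I where "I = replicate n La @ replicate n Lb @ [Lc]"
  have "I \<in> Dc" unfolding I_def Dc_def using dyck_ab[of n] by force
  with Lang obtain qf where qf: "qf \<in> F" and run: "(move R)\<^sup>*\<^sup>* ([], q0, I) ([], qf, [])"
    unfolding L_GRL_def by auto
  have srtI: "srt I" unfolding I_def srt_def by (auto simp: sorted_append)
  have "Inv Q q0 R K I [] qf []"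
    using inv_run[OF G Lang qf srtI Kb run rtranclp.rtrancl_refl] by simp
  then obtain L T m D A B bph u' where H: "Inv0 Q q0 R K I [] qf [] L T m D A B bph u'"
    unfolding Inv_def by blast
  from H have LQ: "L \<in> Q" and Ph: "Phi Q R L + m \<le> card Q + 1"
    and len: "length I \<le> length ([] @ []) + m * (K * (2 * card Q + 1)) + length D"
    and lenD: "length D \<le> K * (card A + (if bph then card B + 1 else 0))"
    and AQ: "A \<subseteq> Q" and BQ: "B \<subseteq> Q"
    using H by (simp_all add: Inv0_def)
  have "1 \<le> Phi Q R L" by (rule Phi_ge1[OF finQ LQ])
  with Ph have mN: "m \<le> N" unfolding N_def by linarith
  have cA: "card A \<le> N" unfolding N_def by (rule card_mono[OF finQ AQ])
  have cB: "card B \<le> N" unfolding N_def by (rule card_mono[OF finQ BQ])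
  have "card A + (if bph then card B + 1 else 0) \<le> 2 * N + 1" using cA cB by auto
  then have "K * (card A + (if bph then card B + 1 else 0)) \<le> K * (2 * N + 1)"
    by (rule mult_le_mono2)
  with lenD have lD: "length D \<le> K * (2 * N + 1)" by linarith
  have "m * (K * (2 * N + 1)) \<le> N * (K * (2 * N + 1))" using mN by (rule mult_le_mono1)
  moreover have "length I \<le> m * (K * (2 * N + 1)) + length D" using len unfolding N_def by simp
  ultimately have "length I \<le> N * (K * (2 * N + 1)) + K * (2 * N + 1)" using lD by linarith
  then have "length I \<le> (N + 1) * (K * (2 * N + 1))" by (simp add: algebra_simps)
  moreover have "length I = 2 * n + 1" unfolding I_def by simp
  ultimately show False unfolding n_def by simp
qed


end
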